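(* Let $A=\mathbb{Z}_2^n\times A_{2'}$, where $n\ge 1$ and $A_{2'}$ is a finite abelian group of odd order. Then a subgroup $H$ of $A$ is a subgroup perfect code of $A$ if and only if either $|H|$ is even or $H=\{0\}\times A_{2'}$.
   Context: Groups are written additively with identity $0$. An element $x\in A$ is a square if $x=2y$ for some $y\in A$; a subset is square-free if it contains no squares. For a square-free $T\subseteq A$, the Cayley sum graph $\mathrm{CayS}(A,T)$ is the simple graph with vertex set $A$ in which distinct $x,y$ are adjacent iff $x+y\in T$. A subset $C$ of the vertex set of a graph is a perfect code if every vertex is at distance at most one from exactly one vertex of $C$. A subgroup $H$ of $A$ is a subgroup perfect code of $A$ if $H$ is a perfect code of $\mathrm{CayS}(A,T)$ for some square-free $T\subseteq A$ (the empty set allowed). *)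

theory Defs
  imports "HOL-Analysis.Analysis" "HOL-Library.Z2"
begin

text \<open>Additive (type-class) abelian groups; the whole type is the group.\<close>

definition is_square :: "'a::ab_group_add \<Rightarrow> bool" where
  "is_square x \<longleftrightarrow> (\<exists>y. x = y + y)"

definition square_free :: "'a::ab_group_add set \<Rightarrow> bool" where
  "square_free T \<longleftrightarrow> (\<forall>x\<in>T. \<not> is_square x)"

definition cays_adj :: "'a::ab_group_add set \<Rightarrow> 'a \<Rightarrow> 'a \<Rightarrow> bool" where
  "cays_adj T x y \<longleftrightarrow> x \<noteq> y \<and> x + y \<in> T"

definition perfect_code :: "'v set \<Rightarrow> ('v \<Rightarrow> 'v \<Rightarrow> bool) \<Rightarrow> 'v set \<Rightarrow> bool" where
  "perfect_code V adj C \<longleftrightarrow> C \<subseteq> V \<and> (\<forall>v\<in>V. \<exists>!c. c \<in> C \<and> (c = v \<or> adj c v))"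

definition is_subgroup :: "'a::ab_group_add set \<Rightarrow> bool" where
  "is_subgroup H \<longleftrightarrow> 0 \<in> H \<and> (\<forall>x\<in>H. \<forall>y\<in>H. x + y \<in> H) \<and> (\<forall>x\<in>H. - x \<in> H)"

definition subgroup_perfect_code :: "'a::ab_group_add set \<Rightarrow> bool" where
  "subgroup_perfect_code H \<longleftrightarrow> is_subgroup H \<and>
     (\<exists>T. square_free T \<and> perfect_code UNIV (cays_adj T) H)"

end

theory Submission
  imports Defs
begin
lemma inv_parity:
  assumes "finite X" "\<forall>x\<in>X. f x \<in> X \<and> f (f x) = x"
  shows "even (card X) \<longleftrightarrow> even (card {x\<in>X. f x = x})"
  using assms
proof (induction "card X" arbitrary: X rule: less_induct)
  case less
  show ?case
  proof (cases "X = {}")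
    case True then show ?thesis by simp
  next
    case False
    then obtain x where x: "x \<in> X" by blast
    show ?thesis
    proof (cases "f x = x")
      case True
      let ?Y = "X - {x}"
      have cY: "card ?Y < card X" using x less.prems by (meson card_Diff1_less)
      have iY: "\<forall>y\<in>?Y. f y \<in> ?Y \<and> f (f y) = y" using less.prems True by auto
      have IH: "even (card ?Y) \<longleftrightarrow> even (card {y\<in>?Y. f y = y})"
        using less.hyps[OF cY] less.prems iY by auto
      have e: "{y\<in>?Y. f y = y} = {y\<in>X. f y = y} - {x}" by auto
      have f2: "finite {y\<in>X. f y = y}" using less.prems by auto
      have "card {y\<in>X. f y = y} = Suc (card {y\<in>?Y. f y = y})"
      proof -
        have "x \<in> {y\<in>X. f y = y}" using x True by simp
        then show ?thesis unfolding e using f2 by (metis card_Suc_Diff1)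
      qed
      moreover have "card X = Suc (card ?Y)" using x less.prems by (metis card_Suc_Diff1)
      ultimately show ?thesis using IH by simp
    next
      case False
      let ?Y = "X - {x, f x}"
      have fx: "f x \<in> X" using less.prems x by auto
      have cX: "card X = card ?Y + 2" using x fx False less.prems
      proof -
        have s: "{x, f x} \<subseteq> X" using x fx by auto
        have c2: "card {x, f x} = 2" using False by simp
        have "card ?Y = card X - card {x, f x}" using s less.prems by (simp add: card_Diff_subset)
        moreover have "card {x, f x} \<le> card X" using s less.prems by (meson card_mono)
        ultimately show ?thesis using c2 by simp
      qed
      have cY: "card ?Y < card X" using cX by simp
      have iY: "\<forall>y\<in>?Y. f y \<in> ?Y \<and> f (f y) = y"
      proof
        fix y assume y: "y \<in> ?Y"
        have a: "f y \<in> X" "f (f y) = y" "f (f x) = x" using y x less.prems by auto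
        have "f y \<noteq> x" using a y by auto
        moreover have "f y \<noteq> f x"
        proof
          assume "f y = f x"
          then have "f (f y) = f (f x)" by simp
          then have "y = x" using a by simp
          then show False using y by simp
        qed
        ultimately show "f y \<in> ?Y \<and> f (f y) = y" using a by simp
      qed
      have IH: "even (card ?Y) \<longleftrightarrow> even (card {y\<in>?Y. f y = y})"
        using less.hyps[OF cY] less.prems iY by auto
      have e: "{y\<in>?Y. f y = y} = {y\<in>X. f y = y}" using False less.prems x by auto
      show ?thesis using IH cX e by simp
    qed
  qed
qed
lemma bit_self: "(x::bit) + x = 0" by simp
lemma vec_self: "(v::(bit,'n::finite) vec) + v = 0" by (simp add: vec_eq_iff)
lemma fin_bit: "finite (UNIV :: bit set)"
proof -
  have "UNIV = {0::bit, 1}" by (auto intro: bit.exhaust)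
  moreover have "finite {0::bit, 1}" by simp
  ultimately show ?thesis by metis
qed
lemma fin_vec: "finite (UNIV :: (bit,'n::finite) vec set)"
proof (subst bij_betw_finite)
  show "bij_betw vec_nth UNIV (Pi (UNIV :: 'n set) (\<lambda>_. UNIV :: bit set))"
    by (intro bij_betwI[of _ _ _ vec_lambda]) (auto simp: vec_eq_iff)
  have "finite (PiE (UNIV :: 'n set) (\<lambda>_. UNIV :: bit set))"
    by (intro finite_PiE) (auto simp: fin_bit)
  also have "(PiE (UNIV :: 'n set) (\<lambda>_. UNIV :: bit set)) = Pi UNIV (\<lambda>_. UNIV)"
    by auto
  finally show "finite \<dots>" .
qed

lemma odd_no_two:
  fixes b :: "'b::ab_group_add"
  assumes "finite (UNIV :: 'b set)" "odd (CARD('b))" "b + b = 0"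
  shows "b = 0"
proof (rule ccontr)
  assume nz: "b \<noteq> 0"
  have inv: "\<forall>x\<in>(UNIV::'b set). x + b \<in> UNIV \<and> x + b + b = x"
    using assms(3) by (simp add: add.assoc)
  have "{x\<in>(UNIV::'b set). x + b = x} = {}" using nz by auto
  then have "even (CARD('b))" using inv_parity[OF assms(1) inv] by simp
  then show False using assms(2) by simp
qed

lemma dbl_inj:
  fixes a c :: "'b::ab_group_add"
  assumes "finite (UNIV :: 'b set)" "odd (CARD('b))" "a + a = c + c"
  shows "a = c"
proof -
  have "(a - c) + (a - c) = 0" using assms(3) by (simp add: algebra_simps)
  then have "a - c = 0" using odd_no_two[OF assms(1,2)] by blast
  then show ?thesis by simp
qed

lemma dbl_surj:
  fixes b :: "'b::ab_group_add"
  assumes "finite (UNIV :: 'b set)" "odd (CARD('b))"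
  shows "\<exists>c. c + c = b"
proof -
  have "inj (\<lambda>c::'b. c + c)" using dbl_inj[OF assms] by (auto intro: injI)
  then have "surj (\<lambda>c::'b. c + c)" using assms(1) finite_UNIV_inj_surj by blast
  then show ?thesis by (metis surjD)
qed

lemma square_iff:
  fixes p :: "(bit, 'n::finite) vec \<times> 'b::ab_group_add"
  assumes "finite (UNIV :: 'b set)" "odd (CARD('b))"
  shows "is_square p \<longleftrightarrow> fst p = 0"
proof
  assume "is_square p"
  then obtain y where "p = y + y" by (auto simp: is_square_def)
  then show "fst p = 0" by (simp add: vec_self)
next
  assume f: "fst p = 0"
  obtain c where c: "c + c = snd p" using dbl_surj[OF assms] by blast
  have "p = (0, c) + (0, c)" using f c by (simp add: prod_eq_iff)
  then show "is_square p" unfolding is_square_def by blast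
qed

lemma into_S:
  fixes H :: "((bit, 'n::finite) vec \<times> 'b::ab_group_add) set"
  assumes fb: "finite (UNIV :: 'b set)" and ob: "odd (CARD('b))" and sg: "is_subgroup H"
    and no: "\<not> (\<exists>v. v \<noteq> 0 \<and> (v, 0) \<in> H)"
    and p: "p \<in> H"
  shows "fst p = 0"
proof -
  obtain v b where pv: "p = (v, b)" by (cases p)
  define K where "K = {c. (0::(bit,'n) vec, c) \<in> H}"
  have KS: "(\<lambda>c. c + c) ` K \<subseteq> K"
  proof
    fix y assume "y \<in> (\<lambda>c. c + c) ` K"
    then obtain c where c: "c \<in> K" "y = c + c" by blast
    have "(0::(bit,'n) vec, c) + (0, c) \<in> H" using c sg unfolding K_def is_subgroup_def by blast
    then show "y \<in> K" using c unfolding K_def by simp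
  qed
  have Ki: "inj_on (\<lambda>c. c + c) K" by (rule inj_onI) (rule dbl_inj[OF fb ob])
  have Kf: "finite K" by (meson fb finite_subset subset_UNIV)
  have Ke: "(\<lambda>c. c + c) ` K = K" using endo_inj_surj[OF Kf KS Ki] .
  have "p + p \<in> H" using p sg unfolding is_subgroup_def by blast
  then have "(v + v, b + b) \<in> H" unfolding pv by simp
  then have "b + b \<in> K" unfolding K_def by (simp only: vec_self mem_Collect_eq)
  then have "b + b \<in> (\<lambda>c. c + c) ` K" using Ke by simp
  then obtain c where c: "c \<in> K" "b + b = c + c" by (rule imageE)
  have "c = b" using dbl_inj[OF fb ob c(2)[symmetric]] .
  then have "(0, b) \<in> H" using c unfolding K_def by simp
  then have "- (0, b) \<in> H" using sg unfolding is_subgroup_def by blast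
  then have "p + - (0, b) \<in> H" using p sg unfolding is_subgroup_def by blast
  then have "(v, 0) \<in> H" unfolding pv by simp
  then have "v = 0" using no by blast
  then show ?thesis using pv by simp
qed


lemma even_iff:
  fixes H :: "((bit, 'n::finite) vec \<times> 'b::ab_group_add) set"
  assumes fb: "finite (UNIV :: 'b set)" and ob: "odd (CARD('b))" and sg: "is_subgroup H"
  shows "even (card H) \<longleftrightarrow> (\<exists>v. v \<noteq> 0 \<and> (v, 0) \<in> H)"
proof -
  have "finite (UNIV :: ((bit, 'n) vec \<times> 'b) set)"
    using fin_vec fb by (simp add: finite_prod)
  then have fH: "finite H" by (rule finite_subset[OF subset_UNIV])
  show ?thesis
  proof
    assume e: "even (card H)"
    show "\<exists>v. v \<noteq> 0 \<and> (v, 0) \<in> H"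
    proof (rule ccontr)
      assume no: "\<not> (\<exists>v. v \<noteq> 0 \<and> (v, 0) \<in> H)"
      have inv: "\<forall>x\<in>H. - x \<in> H \<and> - (- x) = x" using sg unfolding is_subgroup_def by simp
      have "{x\<in>H. - x = x} = {0}"
      proof
        show "{0} \<subseteq> {x\<in>H. - x = x}" using sg unfolding is_subgroup_def by simp
        show "{x\<in>H. - x = x} \<subseteq> {0}"
        proof
          fix x assume x: "x \<in> {x\<in>H. - x = x}"
          have xH: "x \<in> H" and xx: "- x = x" using x by simp_all
          have "x + x = - x + x" by (simp only: xx)
          also have "\<dots> = 0" by simp
          finally have "snd (x + x) = 0" by simp
          then have "snd x + snd x = 0" by simp
          then have "snd x = 0" using odd_no_two[OF fb ob] by blast
          moreover have "fst x = 0" by (rule into_S[OF fb ob sg no xH])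
          ultimately show "x \<in> {0}" by (simp add: prod_eq_iff)
        qed
      qed
      then show False using inv_parity[OF fH inv] e by simp
    qed
  next
    assume "\<exists>v. v \<noteq> 0 \<and> (v, 0) \<in> H"
    then obtain v where v: "v \<noteq> 0" "(v, 0) \<in> H" by blast
    have vv: "(v, 0) + (v, 0) = (0::(bit,'n) vec \<times> 'b)" by (simp add: vec_self zero_prod_def)
    have inv: "\<forall>x\<in>H. x + (v, 0) \<in> H \<and> x + (v, 0) + (v, 0) = x"
    proof
      fix x assume xH: "x \<in> H"
      have "x + (v, 0) \<in> H" using sg v(2) xH unfolding is_subgroup_def by blast
      moreover have "x + (v, 0) + (v, 0) = x" by (simp only: add.assoc vv add_0_right)
      ultimately show "x + (v, 0) \<in> H \<and> x + (v, 0) + (v, 0) = x" by simp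
    qed
    have vnz: "(v, 0) \<noteq> (0::(bit,'n) vec \<times> 'b)" using v(1) by (simp add: zero_prod_def)
    have "x + (v, 0) \<noteq> x" for x :: "(bit,'n) vec \<times> 'b"
    proof
      assume h: "x + (v, 0) = x"
      have "(v, 0) = (x + (v, 0)) - x" by (simp only: add_diff_cancel_left')
      also have "\<dots> = x - x" by (simp only: h)
      also have "\<dots> = 0" by (rule diff_self)
      finally show False using vnz by blast
    qed
    then have em: "{x\<in>H. x + (v, 0) = x} = {}" by blast
    have "even (card H) \<longleftrightarrow> even (card {x\<in>H. x + (v, 0) = x})" by (rule inv_parity[OF fH inv])
    then show "even (card H)" unfolding em by simp
  qed
qed


lemma sg_add: "is_subgroup H \<Longrightarrow> x \<in> H \<Longrightarrow> y \<in> H \<Longrightarrow> x + y \<in> H"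
  unfolding is_subgroup_def by blast
lemma sg_neg: "is_subgroup H \<Longrightarrow> x \<in> H \<Longrightarrow> - x \<in> H"
  unfolding is_subgroup_def by blast
lemma sg_diff: "is_subgroup H \<Longrightarrow> x \<in> H \<Longrightarrow> y \<in> H \<Longrightarrow> x - y \<in> H"
  using sg_add sg_neg by (metis diff_conv_add_uminus)
lemma sg_zero: "is_subgroup H \<Longrightarrow> 0 \<in> H"
  unfolding is_subgroup_def by blast

theorem proposition3p10:
  fixes H :: "((bit, 'n::finite) vec \<times> 'b::ab_group_add) set"
  assumes "finite (UNIV :: 'b set)"
    and "odd (CARD('b))"
    and "is_subgroup H"
  shows "subgroup_perfect_code H \<longleftrightarrow> even (card H) \<or> H = {0} \<times> (UNIV :: 'b set)"
proof -
  note sg = assms(3)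
  have sqS: "\<And>p::(bit, 'n) vec \<times> 'b. is_square p \<longleftrightarrow> fst p = 0"
    using square_iff[OF assms(1,2)] by blast
  have A: "subgroup_perfect_code H \<longleftrightarrow> (\<forall>x. x \<notin> H \<longrightarrow> (\<exists>h\<in>H. fst (x + h) \<noteq> 0))"
  proof
    assume "subgroup_perfect_code H"
    then obtain T where sf: "square_free T" and pc: "perfect_code UNIV (cays_adj T) H"
      unfolding subgroup_perfect_code_def by blast
    show "(\<forall>x. x \<notin> H \<longrightarrow> (\<exists>h\<in>H. fst (x + h) \<noteq> 0))"
    proof (intro allI impI)
      fix x assume x: "x \<notin> H"
      from pc have "\<exists>!c. c \<in> H \<and> (c = x \<or> cays_adj T c x)" unfolding perfect_code_def by blast
      then obtain c where c: "c \<in> H" "c = x \<or> cays_adj T c x" by blast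
      have "c \<noteq> x" using c x by blast
      then have "c + x \<in> T" using c unfolding cays_adj_def by blast
      then have "\<not> is_square (c + x)" using sf unfolding square_free_def by blast
      then have "fst (c + x) \<noteq> 0" using sqS by blast
      moreover have "x + c = c + x" by (rule add.commute)
      ultimately have "fst (x + c) \<noteq> 0" by metis
      then show "\<exists>h\<in>H. fst (x + h) \<noteq> 0" using c by blast
    qed
  next
    assume cr: "(\<forall>x. x \<notin> H \<longrightarrow> (\<exists>h\<in>H. fst (x + h) \<noteq> 0))"
    define r where "r x = (SOME y. y - x \<in> H \<and> fst y \<noteq> 0)" for x
    have r: "r x - x \<in> H \<and> fst (r x) \<noteq> 0" if xH: "x \<notin> H" for x
    proof -
      obtain h where h: "h \<in> H" "fst (x + h) \<noteq> 0" using cr[rule_format, OF xH] by (rule bexE)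
      have "(x + h) - x \<in> H \<and> fst (x + h) \<noteq> 0" using h by simp
      then show ?thesis unfolding r_def by (rule someI[where P="\<lambda>y. y - x \<in> H \<and> fst y \<noteq> 0"])
    qed
    have rc: "r y = r x" if "y - x \<in> H" for x y
    proof -
      have eq: "z - y \<in> H \<longleftrightarrow> z - x \<in> H" for z
      proof
        assume "z - y \<in> H"
        then have "(z - y) + (y - x) \<in> H" using sg_add[OF sg _ that] by blast
        then show "z - x \<in> H" by simp
      next
        assume "z - x \<in> H"
        then have "(z - x) - (y - x) \<in> H" using sg_diff[OF sg _ that] by blast
        then show "z - y \<in> H" by simp
      qed
      have "(\<lambda>z. z - y \<in> H \<and> fst z \<noteq> 0) = (\<lambda>z. z - x \<in> H \<and> fst z \<noteq> 0)"
        by (rule ext) (simp only: eq)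
      then show ?thesis unfolding r_def by simp
    qed
    define T where "T = r ` (- H)"
    have Tmem: "\<exists>x. x \<notin> H \<and> t = r x" if tT: "t \<in> T" for t
      using tT unfolding T_def by (auto simp del: split_paired_Ex)
    have TH: "t \<notin> H" if tT: "t \<in> T" for t
    proof
      assume tH: "t \<in> H"
      obtain x where x: "x \<notin> H" "t = r x" using Tmem[OF tT] by metis
      have "r x - (r x - x) \<in> H" using sg_diff[OF sg] tH x r[OF x(1)] by blast
      then show False using x by simp
    qed
    have sf: "square_free T" unfolding square_free_def
    proof
      fix t assume tT: "t \<in> T"
      obtain x where x: "x \<notin> H" "t = r x" using Tmem[OF tT] by metis
      show "\<not> is_square t" using r[OF x(1)] x(2) sqS by simp
    qed
    have pc: "perfect_code UNIV (cays_adj T) H"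
      unfolding perfect_code_def cays_adj_def
    proof (intro conjI ballI)
      fix v :: "(bit, 'n) vec \<times> 'b"
      show "\<exists>!c. c \<in> H \<and> (c = v \<or> c \<noteq> v \<and> c + v \<in> T)"
      proof (cases "v \<in> H")
        case True
        show ?thesis
        proof (rule ex1I[where a = v])
          show "v \<in> H \<and> (v = v \<or> v \<noteq> v \<and> v + v \<in> T)" using True by simp
          fix c assume c: "c \<in> H \<and> (c = v \<or> c \<noteq> v \<and> c + v \<in> T)"
          have "c + v \<in> H" using sg_add[OF sg] c True by blast
          then show "c = v" using c TH by blast
        qed
      next
        case False
        have rv: "r v - v \<in> H" "fst (r v) \<noteq> 0" using r[OF False] by auto
        have rT: "r v \<in> T" unfolding T_def using False by auto
        show ?thesis
        proof (rule ex1I[where a = "r v - v"])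
          show "r v - v \<in> H \<and> (r v - v = v \<or> r v - v \<noteq> v \<and> r v - v + v \<in> T)"
            using rv rT False by auto
          fix c assume c: "c \<in> H \<and> (c = v \<or> c \<noteq> v \<and> c + v \<in> T)"
          have cT: "c + v \<in> T" using c False by blast
          obtain y where y: "y \<notin> H" "c + v = r y" using Tmem[OF cT] by metis
          have "r y - y \<in> H" using r[OF y(1)] by blast
          then have "(r y - y) - c \<in> H" using sg_diff[OF sg] c by blast
          moreover have "(r y - y) - c = v - y"
          proof -
            have v_eq: "v = r y - c" using y(2) by (metis add_diff_cancel_left')
            show ?thesis unfolding v_eq by (simp add: algebra_simps)
          qed
          ultimately have "v - y \<in> H" by simp
          then have "r v = r y" by (rule rc)
          then show "c = r v - v" using y(2) by (metis add_diff_cancel_right')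
        qed
      qed
    qed simp
    show "subgroup_perfect_code H" unfolding subgroup_perfect_code_def using sg sf pc by blast
  qed
  have S_eq: "{p::(bit, 'n) vec \<times> 'b. fst p = 0} = {0} \<times> UNIV" by auto
  have B: "(\<forall>x. x \<notin> H \<longrightarrow> (\<exists>h\<in>H. fst (x + h) \<noteq> 0)) \<longleftrightarrow> (\<exists>v. v \<noteq> 0 \<and> (v, 0) \<in> H) \<or> H = {0} \<times> UNIV"
  proof
    assume cr: "(\<forall>x. x \<notin> H \<longrightarrow> (\<exists>h\<in>H. fst (x + h) \<noteq> 0))"
    show "(\<exists>v. v \<noteq> 0 \<and> (v, 0) \<in> H) \<or> H = {0} \<times> UNIV"
    proof (cases "\<exists>v. v \<noteq> 0 \<and> (v, 0) \<in> H")
      case True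
      then show ?thesis by (rule disjI1)
    next
      case False
      note no = False
      have sub: "H \<subseteq> {0} \<times> UNIV" using into_S[OF assms(1,2) sg no] by (auto simp: mem_Times_iff)
      have "{0} \<times> UNIV \<subseteq> H"
      proof
        fix x :: "(bit, 'n) vec \<times> 'b" assume x: "x \<in> {0} \<times> UNIV"
        show "x \<in> H"
        proof (rule ccontr)
          assume xH: "x \<notin> H"
          obtain h where h: "h \<in> H" "fst (x + h) \<noteq> 0" using cr[rule_format, OF xH] by (rule bexE)
          have "fst h = 0" using sub h(1) by (auto simp: mem_Times_iff)
          then show False using h(2) x by (auto simp: mem_Times_iff)
        qed
      qed
      then have "H = {0} \<times> UNIV" using sub by blast
      then show ?thesis by (rule disjI2)
    qed
  next
    assume d: "(\<exists>v. v \<noteq> 0 \<and> (v, 0) \<in> H) \<or> H = {0} \<times> UNIV"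
    show "(\<forall>x. x \<notin> H \<longrightarrow> (\<exists>h\<in>H. fst (x + h) \<noteq> 0))"
    proof (intro allI impI)
      fix x :: "(bit, 'n) vec \<times> 'b" assume x: "x \<notin> H"
      show "\<exists>h\<in>H. fst (x + h) \<noteq> 0"
      proof (cases "fst x = 0")
        case False
        then show ?thesis using sg_zero[OF sg] by (intro bexI[where x = 0]) auto
      next
        case True
        show ?thesis
        proof (cases "H = {0} \<times> UNIV")
          case True
          then show ?thesis using x \<open>fst x = 0\<close> by (auto simp: mem_Times_iff)
        next
          case False
          then obtain v where v: "v \<noteq> 0" "(v, 0) \<in> H" using d by blast
          show ?thesis using v True by (intro bexI[where x = "(v, 0)"]) auto
        qed
      qed
    qed
  qed
  have C: "even (card H) \<longleftrightarrow> (\<exists>v. v \<noteq> 0 \<and> (v, 0) \<in> H)" by (rule even_iff[OF assms])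
  have D: "subgroup_perfect_code H \<longleftrightarrow> (\<exists>v. v \<noteq> 0 \<and> (v, 0) \<in> H) \<or> H = {0} \<times> UNIV"
    using A B by (rule trans)
  show ?thesis unfolding C by (rule D)
qed

end
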